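(* For $\tau\in\mathbb{R}$, $$\mu_0(\tau;0):=\int_{-\infty}^{\infty}\exp(-x^6+\tau x^4)\,dx$$ is given by $$\mu_0(\tau;0)=\tfrac13\Gamma\!\left(\tfrac16\right){}_2F_2\!\left(\tfrac1{12},\tfrac7{12};\tfrac13,\tfrac23;\tfrac{4\tau^3}{27}\right)+\tfrac13\tau\Gamma\!\left(\tfrac56\right){}_2F_2\!\left(\tfrac5{12},\tfrac{11}{12};\tfrac23,\tfrac43;\tfrac{4\tau^3}{27}\right)+\frac{\tau^2\sqrt{\pi}}{12}{}_2F_2\!\left(\tfrac34,\tfrac54;\tfrac43,\tfrac53;\tfrac{4\tau^3}{27}\right).$$
   Context: ${}_2F_2(a_1,a_2;b_1,b_2;z)$ denotes the generalised hypergeometric function with upper parameters $a_1,a_2$ and lower parameters $b_1,b_2$. *)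

theory Defs
  imports "HOL-Analysis.Analysis"
begin

definition hyp2F2 :: "real \<Rightarrow> real \<Rightarrow> real \<Rightarrow> real \<Rightarrow> real \<Rightarrow> real" where
  "hyp2F2 a1 a2 b1 b2 z =
     (\<Sum>n. (pochhammer a1 n * pochhammer a2 n) / (pochhammer b1 n * pochhammer b2 n)
            * z ^ n / fact n)"

end

theory Submission
  imports Defs
begin

lemma pt_eq:
  fixes x :: real and k :: nat
  assumes "x \<noteq> 0"
  shows "\<bar>6 * x^5\<bar> * ((x^6) powr ((4*real k+1)/6 - 1) / exp (x^6) * (1/6)) = x^(4*k) * exp (-(x^6))"
proof -
  have ax: "\<bar>x\<bar> > 0" using assms by simp
  have h6: "x^6 = \<bar>x\<bar> powr 6" using ax by (simp add: powr_realpow power_even_abs_numeral)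
  have "(x^6) powr ((4*real k+1)/6 - 1) = \<bar>x\<bar> powr (6 * ((4*real k+1)/6 - 1))"
    by (subst h6, subst powr_powr, rule refl)
  also have "6 * ((4*real k+1)/6 - 1) = 4*real k - 5" by (simp add: field_simps)
  finally have "(x^6) powr ((4*real k+1)/6 - 1) = \<bar>x\<bar> powr (4*real k - 5)" .
  moreover have "\<bar>6 * x^5\<bar> = 6 * \<bar>x\<bar> powr 5" using ax by (simp add: abs_mult power_abs powr_realpow)
  moreover have "\<bar>x\<bar> powr 5 * \<bar>x\<bar> powr (4*real k - 5) = \<bar>x\<bar> powr (4 * real k)"
    by (simp only: powr_add[symmetric]) simp
  moreover have "\<bar>x\<bar> powr (4 * real k) = x^(4*k)"
  proof -
    have "\<bar>x\<bar> powr (4 * real k) = \<bar>x\<bar>^(4*k)" using ax by (simp add: powr_realpow[symmetric])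
    also have "\<dots> = x^(4*k)" by (simp add: power_mult power_even_abs_numeral)
    finally show ?thesis .
  qed
  ultimately show ?thesis by (simp add: exp_minus field_simps)
qed

lemma Gamma_Ioi:
  fixes a :: real assumes "a > 0"
  shows "((\<lambda>u. u powr (a-1) / exp u * (1/6)) has_integral Gamma a / 6) {0<..}"
proof -
  have "((\<lambda>u. u powr (a-1) / exp u) has_integral Gamma a) {0..}"
    using Gamma_integral_real[OF assms] .
  hence "((\<lambda>u. u powr (a-1) / exp u) has_integral Gamma a) {0<..}"
  proof (rule has_integral_spike_set_eq[THEN iffD1, rotated 2])
    show "negligible {x \<in> {0..} - {0<..}. x powr (a - 1) / exp x \<noteq> 0}"
      by (rule negligible_subset[of "{0}"]) auto
    show "negligible {x \<in> {0<..} - {0..}. x powr (a - 1) / exp x \<noteq> (0::real)}"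
      by (rule negligible_subset[of "{}"]) auto
  qed
  from has_integral_mult_left[OF this, of "1/6"] show ?thesis by simp
qed

lemma half_moment:
  fixes k :: nat and S :: "real set"
  assumes S: "S \<in> sets lebesgue" and inj: "inj_on (\<lambda>x. x^6) S"
    and img: "(\<lambda>x::real. x^6) ` S = {0<..}" and nz: "0 \<notin> S"
  shows "((\<lambda>x. x^(4*k) * exp(-(x^6))) has_integral Gamma((4*real k+1)/6)/6) S"
proof -
  define a where "a = (4*real k+1)/6"
  have a: "a > 0" unfolding a_def by simp
  define f where "f u = u powr (a-1) / exp u * (1/6)" for u :: real
  have G: "(f has_integral Gamma a / 6) {0<..}" unfolding f_def by (rule Gamma_Ioi[OF a])
  have fabs: "f absolutely_integrable_on {0<..}"
    using G by (intro nonnegative_absolutely_integrable_1) (auto simp: f_def)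
  have der: "((\<lambda>x. x^6) has_field_derivative (6 * x^5)) (at x within S)" for x :: real
    by (auto intro!: derivative_eq_intros)
  have "(\<lambda>x. \<bar>6 * x^5\<bar> * f (x^6)) absolutely_integrable_on S \<and>
           integral S (\<lambda>x. \<bar>6 * x^5\<bar> * f (x^6)) = Gamma a / 6"
  proof -
    have "integral {0<..} f = Gamma a / 6" using G by (rule integral_unique)
    thus ?thesis
      using has_absolute_integral_change_of_variables_1'[OF S der inj, of f "Gamma a / 6", unfolded img]
        fabs by blast
  qed
  hence "((\<lambda>x. \<bar>6 * x^5\<bar> * f (x^6)) has_integral Gamma a / 6) S"
    using absolutely_integrable_on_def integrable_integral by metis
  moreover have "\<bar>6 * x^5\<bar> * f (x^6) = x^(4*k) * exp(-(x^6))" if "x \<in> S" for x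
    using pt_eq[of x k] that nz unfolding f_def a_def by auto
  ultimately show ?thesis unfolding a_def by (subst has_integral_cong[symmetric]) auto
qed

lemma moment_HK:
  fixes k :: nat
  shows "((\<lambda>x::real. x^(4*k) * exp(-(x^6))) has_integral Gamma((4*real k+1)/6)/3) UNIV"
proof -
  let ?h = "\<lambda>x::real. x^(4*k) * exp(-(x^6))"
  have p: "((\<lambda>x::real. x^(4*k) * exp(-(x^6))) has_integral Gamma((4*real k+1)/6)/6) {0<..}"
  proof (rule half_moment)
    show "inj_on (\<lambda>x::real. x ^ 6) {0<..}"
      by (auto intro!: inj_onI simp: power_eq_iff_eq_base)
    show "(\<lambda>x::real. x ^ 6) ` {0<..} = {0<..}"
    proof (auto)
      fix u :: real assume "u > 0"
      thus "u \<in> (\<lambda>x. x ^ 6) ` {0<..}"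
        by (intro image_eqI[of _ _ "root 6 u"]) (auto simp: real_root_pow_pos)
    qed
  qed auto
  have n: "((\<lambda>x::real. x^(4*k) * exp(-(x^6))) has_integral Gamma((4*real k+1)/6)/6) {..<0}"
  proof (rule half_moment)
    show "inj_on (\<lambda>x::real. x ^ 6) {..<0}"
    proof (rule inj_onI)
      fix x y :: real assume "x \<in> {..<0}" "y \<in> {..<0}" "x^6 = y^6"
      hence "(-x)^6 = (-y)^6" "-x \<ge> 0" "-y \<ge> 0" by auto
      hence "-x = -y" by (simp only: power_eq_iff_eq_base)
      thus "x = y" by simp
    qed
    show "(\<lambda>x::real. x ^ 6) ` {..<0} = {0<..}"
    proof (auto)
      fix u :: real assume "u > 0"
      thus "u \<in> (\<lambda>x. x ^ 6) ` {..<0}"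
        by (intro image_eqI[of _ _ "- root 6 u"]) (auto simp: real_root_pow_pos)
    qed
  qed auto
  have "(?h has_integral (Gamma((4*real k+1)/6)/6 + Gamma((4*real k+1)/6)/6)) ({..<0} \<union> {0<..})"
  proof (rule has_integral_Un[OF n p])
    have "{..<0} \<inter> {0<..} = ({}::real set)" by auto
    thus "negligible ({..<0} \<inter> ({0<..}::real set))" by simp
  qed
  hence u: "(?h has_integral Gamma((4*real k+1)/6)/3) ({..<0} \<union> {0<..})" by simp
  show ?thesis
  proof (rule has_integral_spike_set_eq[THEN iffD1, OF _ _ u])
    show "negligible {x \<in> ({..<0} \<union> {0<..}) - UNIV. ?h x \<noteq> 0}"
      by (rule negligible_subset[of "{}"]) auto
    show "negligible {x \<in> UNIV - ({..<0} \<union> {0<..}). ?h x \<noteq> 0}"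
      by (rule negligible_subset[of "{0}"]) auto
  qed
qed

lemma moment:
  fixes k :: nat
  shows "has_bochner_integral lborel (\<lambda>x::real. x^(4*k) * exp(-(x^6))) (Gamma((4*real k+1)/6)/3)"
proof (rule has_bochner_integral_nn_integral)
  show "(\<lambda>x::real. x^(4*k) * exp(-(x^6))) \<in> borel_measurable lborel" by measurable
  show "AE x in lborel. 0 \<le> (x::real)^(4*k) * exp(-(x^6))"
    by (simp add: power_mult power_even_abs_numeral zero_le_power_eq)
  show "0 \<le> Gamma((4*real k+1)/6)/3" by (simp add: Gamma_real_pos less_imp_le)
  have "integral\<^sup>N lborel (\<lambda>x. indicator UNIV x * ((x::real)^(4*k) * exp(-(x^6)))) = Gamma((4*real k+1)/6)/3"
    by (rule nn_integral_has_integral_lebesgue[OF _ moment_HK])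
       (simp add: power_mult zero_le_power_eq)
  thus "(\<integral>\<^sup>+ x. ennreal ((x::real)^(4*k) * exp(-(x^6))) \<partial>lborel) = ennreal (Gamma((4*real k+1)/6)/3)"
    by simp
qed

lemma poly_bound:
  fixes b w :: real assumes "b \<ge> 0" "w \<ge> 0"
  shows "b * w^2 \<le> w^3/2 + 4*b^3"
proof (cases "w \<le> 2*b")
  case True
  have "w^2 \<le> (2*b)^2" using True assms by (intro power_mono) auto
  hence "b * w^2 \<le> b * (2*b)^2" using assms by (intro mult_left_mono) auto
  also have "\<dots> = 4*b^3" by (simp add: power2_eq_square power3_eq_cube)
  moreover have "w^3 \<ge> 0" using assms by simp
  ultimately show ?thesis by linarith
next
  case False
  hence "b * w^2 \<le> (w/2) * w^2" using assms by (intro mult_right_mono) auto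
  also have "\<dots> = w^3/2" by (simp add: power2_eq_square power3_eq_cube)
  moreover have "b^3 \<ge> 0" using assms by simp
  ultimately show ?thesis by linarith
qed

lemma integrable_g:
  fixes b :: real assumes b: "b \<ge> 0"
  shows "integrable lborel (\<lambda>x::real. exp(-(x^6) + b*x^4))"
proof -
  have i0: "integrable lborel (\<lambda>x::real. exp(-(x^6)))"
    using moment[of 0] by (simp add: has_bochner_integral_iff)
  define c :: real where "c = root 6 (1/2)"
  have c0: "c \<noteq> 0" unfolding c_def by simp
  have c6: "c^6 = 1/2" unfolding c_def by (simp add: real_root_pow_pos)
  have "integrable lborel (\<lambda>x. (\<lambda>x::real. exp(-(x^6))) (0 + c * x))"
    by (rule lborel_integrable_real_affine[OF i0 c0])
  hence "integrable lborel (\<lambda>x::real. exp(-(x^6)/2))"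
    by (simp add: power_mult_distrib c6)
  hence i1: "integrable lborel (\<lambda>x::real. exp(4*b^3) * exp(-(x^6)/2))"
    by (rule integrable_mult_right)
  show ?thesis
  proof (rule Bochner_Integration.integrable_bound[OF i1])
    show "(\<lambda>x::real. exp(-(x^6) + b*x^4)) \<in> borel_measurable lborel" by measurable
    show "AE x in lborel. norm (exp(-(x^6) + b*x^4)) \<le> norm (exp(4*b^3) * exp(-((x::real)^6)/2))"
    proof (rule AE_I2)
      fix x :: real
      have "b * (x^2)^2 \<le> (x^2)^3/2 + 4*b^3" by (rule poly_bound[OF b]) simp
      hence "-(x^6) + b*x^4 \<le> 4*b^3 + (-(x^6)/2)" by (simp add: power_mult[symmetric])
      hence l: "exp(-(x^6) + b*x^4) \<le> exp(4*b^3 + (-(x^6)/2))" by (subst exp_le_cancel_iff)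
      have e: "exp(4*b^3) * exp(-(x^6)/2) = exp(4*b^3 + (-(x^6)/2))" by (rule exp_add[symmetric])
      show "norm (exp(-(x^6) + b*x^4)) \<le> norm (exp(4*b^3) * exp(-(x^6)/2))"
        unfolding e real_norm_def abs_exp_cancel by (rule l)
    qed
  qed
qed

lemma exp_sums_real: "(\<lambda>n. (y::real)^n / fact n) sums exp y"
  using exp_converges[of y] by (simp add: divide_inverse mult.commute)

lemma integral_series:
  fixes t :: real
  shows "integrable lborel (\<lambda>x::real. exp(-(x^6) + t*x^4)) \<and>
    (\<integral>x. exp(-(x^6) + t*x^4) \<partial>lborel) = (\<Sum>i. t^i / fact i * (Gamma((4*real i+1)/6)/3)) \<and>
    summable (\<lambda>i. \<bar>t^i / fact i * (Gamma((4*real i+1)/6)/3)\<bar>)"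
proof -
  define M where "M i = Gamma((4*real i+1)/6)/3" for i :: nat
  have Mpos: "M i > 0" for i unfolding M_def by (simp add: Gamma_real_pos)
  define h where "h i x = x^(4*i) * exp(-(x^6))" for i :: nat and x :: real
  have hnn: "h i x \<ge> 0" for i x unfolding h_def by (simp add: power_mult zero_le_power_eq)
  have hb: "has_bochner_integral lborel (h i) (M i)" for i
    unfolding h_def M_def by (rule moment)
  define f where "f i x = t^i / fact i * h i x" for i :: nat and x :: real
  have fb: "has_bochner_integral lborel (f i) (t^i / fact i * M i)" for i
    unfolding f_def by (rule has_bochner_integral_mult_right[OF hb])
  have fint: "integrable lborel (f i)" for i using fb by (simp add: has_bochner_integral_iff)
  have fI: "integral\<^sup>L lborel (f i) = t^i / fact i * M i" for i using fb by (simp add: has_bochner_integral_iff)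
  have nf: "norm (f i x) = (\<bar>t\<bar>*x^4)^i / fact i * exp(-(x^6))" for i x
    unfolding f_def h_def by (simp add: abs_mult power_abs power_mult_distrib power_mult power_even_abs_numeral)
  have ff: "f i x = (t*x^4)^i / fact i * exp(-(x^6))" for i x
    unfolding f_def h_def by (simp add: power_mult_distrib power_mult)
  have nfb: "has_bochner_integral lborel (\<lambda>x. norm (f i x)) (\<bar>t\<bar>^i / fact i * M i)" for i
  proof -
    have "norm (f i x) = \<bar>t\<bar>^i / fact i * h i x" for x
      unfolding f_def using hnn[of i x] by (simp add: abs_mult power_abs)
    thus ?thesis using has_bochner_integral_mult_right[OF hb, of "\<bar>t\<bar>^i / fact i"] by simp
  qed
  have nfI: "(\<integral>x. norm (f i x) \<partial>lborel) = \<bar>t^i / fact i * M i\<bar>" for i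
    using nfb[of i] Mpos[of i] by (simp add: has_bochner_integral_iff abs_mult power_abs)
  have psum: "summable (\<lambda>i. norm (f i x))" for x
    unfolding nf using sums_mult2[OF exp_sums_real, of "\<bar>t\<bar>*x^4" "exp(-(x^6))"]
    by (simp add: sums_iff)
  have gint: "integrable lborel (\<lambda>x::real. exp(-(x^6) + \<bar>t\<bar>*x^4))"
    by (rule integrable_g) simp
  have gle: "(\<Sum>i\<le>n. norm (f i x)) \<le> exp(-(x^6) + \<bar>t\<bar>*x^4)" for n x
  proof -
    have "(\<Sum>i\<le>n. norm (f i x)) \<le> (\<Sum>i. norm (f i x))"
      by (rule sum_le_suminf[OF psum]) auto
    also have "(\<Sum>i. norm (f i x)) = exp(\<bar>t\<bar>*x^4) * exp(-(x^6))"
      unfolding nf using sums_mult2[OF exp_sums_real, of "\<bar>t\<bar>*x^4" "exp(-(x^6))"]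
      by (simp add: sums_iff)
    also have "\<dots> = exp(-(x^6) + \<bar>t\<bar>*x^4)" by (simp add: exp_add[symmetric] add.commute)
    finally show ?thesis .
  qed
  have sumI: "summable (\<lambda>i. (\<integral>x. norm (f i x) \<partial>lborel))"
  proof (rule bounded_imp_summable)
    show "0 \<le> (\<integral>x. norm (f i x) \<partial>lborel)" for i by simp
    fix n
    have "(\<Sum>i\<le>n. (\<integral>x. norm (f i x) \<partial>lborel)) = (\<integral>x. (\<Sum>i\<le>n. norm (f i x)) \<partial>lborel)"
      by (rule Bochner_Integration.integral_sum[symmetric]) (use fint in auto)
    also have "\<dots> \<le> (\<integral>x. exp(-(x^6) + \<bar>t\<bar>*x^4) \<partial>lborel)"
      by (rule integral_mono[OF _ gint gle]) (use fint in auto)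
    finally show "(\<Sum>i\<le>n. (\<integral>x. norm (f i x) \<partial>lborel)) \<le> (\<integral>x. exp(-(x^6) + \<bar>t\<bar>*x^4) \<partial>lborel)" .
  qed
  have sf: "(\<Sum>i. f i x) = exp(-(x^6) + t*x^4)" for x
  proof -
    have "(\<Sum>i. f i x) = exp(t*x^4) * exp(-(x^6))"
      unfolding ff using sums_mult2[OF exp_sums_real, of "t*x^4" "exp(-(x^6))"]
      by (simp add: sums_iff)
    also have "\<dots> = exp(-(x^6) + t*x^4)" by (simp add: exp_add[symmetric] add.commute)
    finally show ?thesis .
  qed
  have I1: "integrable lborel (\<lambda>x. (\<Sum>i. f i x))"
    by (rule integrable_suminf[OF fint _ sumI]) (rule AE_I2, rule psum)
  have I2: "(\<integral>x. (\<Sum>i. f i x) \<partial>lborel) = (\<Sum>i. integral\<^sup>L lborel (f i))"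
    by (rule integral_suminf[OF fint _ sumI]) (rule AE_I2, rule psum)
  show ?thesis
    using I1 I2 sumI unfolding sf fI nfI M_def by simp
qed

lemma fact3_0: "(fact (3*n) :: real) = 27^n * fact n * pochhammer (1/3) n * pochhammer (2/3) n"
proof (induction n)
  case (Suc n)
  have "(fact (3*Suc n) :: real) = (fact (3*n)::real) * ((3*real n+1) * (3*real n+2) * (3*real n+3))"
    by (simp add: fact_Suc algebra_simps numeral_3_eq_3)
  also have "\<dots> = 27^Suc n * fact (Suc n) * pochhammer (1/3) (Suc n) * pochhammer (2/3) (Suc n)"
    by (subst Suc.IH) (simp add: pochhammer_Suc field_simps)
  finally show ?case .
qed simp

lemma fact3_1: "(fact (3*n+1) :: real) = 27^n * fact n * pochhammer (2/3) n * pochhammer (4/3) n"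
proof (induction n)
  case (Suc n)
  have "(fact (3*Suc n+1) :: real) = (fact (3*n+1)::real) * ((3*real n+2) * (3*real n+3) * (3*real n+4))"
    by (simp add: fact_Suc algebra_simps numeral_3_eq_3)
  also have "\<dots> = 27^Suc n * fact (Suc n) * pochhammer (2/3) (Suc n) * pochhammer (4/3) (Suc n)"
    by (subst Suc.IH) (simp add: pochhammer_Suc field_simps)
  finally show ?case .
qed simp

lemma fact3_2: "(fact (3*n+2) :: real) = 2 * 27^n * fact n * pochhammer (4/3) n * pochhammer (5/3) n"
proof (induction n)
  case (Suc n)
  have "(fact (3*Suc n+2) :: real) = (fact (3*n+2)::real) * ((3*real n+3) * (3*real n+4) * (3*real n+5))"
    by (simp add: fact_Suc algebra_simps numeral_3_eq_3)
  also have "\<dots> = 2 * 27^Suc n * fact (Suc n) * pochhammer (4/3) (Suc n) * pochhammer (5/3) (Suc n)"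
    by (subst Suc.IH) (simp add: pochhammer_Suc field_simps)
  finally show ?case .
qed (simp add: numeral_2_eq_2)

lemma Gamma_double:
  fixes b :: real assumes "b > 0"
  shows "Gamma (2*b + 2*real n) = Gamma (2*b) * 4^n * pochhammer b n * pochhammer (b+1/2) n"
proof -
  have nz: "2*b \<notin> \<int>\<^sub>\<le>\<^sub>0" using assms by (auto elim!: nonpos_Ints_cases)
  have "pochhammer (2*b) (2*n) = Gamma (2*b + of_nat (2*n)) / Gamma (2*b)"
    by (rule pochhammer_Gamma[OF nz])
  moreover have "Gamma (2*b) > 0" using assms by (simp add: Gamma_real_pos)
  ultimately have "Gamma (2*b + 2*real n) = Gamma (2*b) * pochhammer (2*b) (2*n)" by simp
  also have "\<dots> = Gamma (2*b) * 4^n * pochhammer b n * pochhammer (b+1/2) n"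
    by (simp add: pochhammer_double power_mult)
  finally show ?thesis .
qed

lemma term0:
  fixes t :: real
  shows "t^(3*n) / fact (3*n) * (Gamma((4*real(3*n)+1)/6)/3) =
    1/3 * Gamma(1/6) * (pochhammer (1/12) n * pochhammer (7/12) n / (pochhammer (1/3) n * pochhammer (2/3) n) * (4*t^3/27)^n / fact n)"
proof -
  have e: "(4*real(3*n)+1)/6 = 2*(1/12) + 2*real n" by simp
  have g: "Gamma((4*real(3*n)+1)/6) = Gamma(1/6) * 4^n * pochhammer (1/12) n * pochhammer (7/12) n"
    unfolding e using Gamma_double[of "1/12" n] by simp
  have p: "pochhammer (1/3) n > (0::real)" "pochhammer (2/3) n > (0::real)"
    by (auto intro!: pochhammer_pos)
  have tpow: "(t^n)^3 = (t^3)^n" by (simp add: power_mult[symmetric] mult.commute)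
  show ?thesis unfolding g fact3_0 using p
    by (simp add: field_simps power_mult_distrib power_mult tpow)
qed

lemma term1:
  fixes t :: real
  shows "t^(3*n+1) / fact (3*n+1) * (Gamma((4*real(3*n+1)+1)/6)/3) =
    1/3 * t * Gamma(5/6) * (pochhammer (5/12) n * pochhammer (11/12) n / (pochhammer (2/3) n * pochhammer (4/3) n) * (4*t^3/27)^n / fact n)"
proof -
  have e: "(4*real(3*n+1)+1)/6 = 2*(5/12) + 2*real n" by simp
  have g: "Gamma((4*real(3*n+1)+1)/6) = Gamma(5/6) * 4^n * pochhammer (5/12) n * pochhammer (11/12) n"
    unfolding e using Gamma_double[of "5/12" n] by simp
  have p: "pochhammer (2/3) n > (0::real)" "pochhammer (4/3) n > (0::real)"
    by (auto intro!: pochhammer_pos)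
  have tpow: "(t^n)^3 = (t^3)^n" by (simp add: power_mult[symmetric] mult.commute)
  show ?thesis unfolding g fact3_1 using p
    by (simp add: field_simps power_mult_distrib power_mult tpow)
qed

lemma term2:
  fixes t :: real
  shows "t^(3*n+2) / fact (3*n+2) * (Gamma((4*real(3*n+2)+1)/6)/3) =
    t^2 * sqrt pi / 12 * (pochhammer (3/4) n * pochhammer (5/4) n / (pochhammer (4/3) n * pochhammer (5/3) n) * (4*t^3/27)^n / fact n)"
proof -
  have e: "(4*real(3*n+2)+1)/6 = 2*(3/4) + 2*real n" by simp
  have g32: "Gamma (3/2 :: real) = sqrt pi / 2"
  proof -
    have "(1/2::real) \<notin> \<int>\<^sub>\<le>\<^sub>0" by (auto elim!: nonpos_Ints_cases)
    thus ?thesis using Gamma_plus1[of "1/2::real"] by (simp add: Gamma_one_half_real)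
  qed
  have g: "Gamma((4*real(3*n+2)+1)/6) = sqrt pi / 2 * 4^n * pochhammer (3/4) n * pochhammer (5/4) n"
    unfolding e using Gamma_double[of "3/4" n] g32 by simp
  have p: "pochhammer (4/3) n > (0::real)" "pochhammer (5/3) n > (0::real)"
    by (auto intro!: pochhammer_pos)
  have tpow: "(t^n)^3 = (t^3)^n" by (simp add: power_mult[symmetric] mult.commute)
  show ?thesis unfolding g fact3_2 using p
    by (simp add: field_simps power_mult_distrib power_mult tpow power2_eq_square)
qed

lemma sub_summable:
  fixes a :: "nat \<Rightarrow> real"
  assumes "summable (\<lambda>i. \<bar>a i\<bar>)"
  shows "summable (\<lambda>n. a (3*n+r))"
proof -
  define g where "g n = 3*n+r" for n :: nat
  have sm: "strict_mono g" unfolding g_def by (rule strict_monoI) simp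
  define F where "F m = (if m \<in> range g then \<bar>a m\<bar> else 0)" for m
  have "summable F"
    by (rule summable_comparison_test'[OF assms, of 0]) (simp add: F_def)
  hence "summable (\<lambda>n. F (g n))"
    by (subst summable_mono_reindex[OF sm]) (auto simp: F_def)
  hence "summable (\<lambda>n. \<bar>a (3*n+r)\<bar>)" by (simp add: F_def g_def)
  thus ?thesis by (rule summable_rabs_cancel)
qed

lemma split3:
  fixes a :: "nat \<Rightarrow> real"
  assumes as: "summable (\<lambda>i. \<bar>a i\<bar>)"
  shows "suminf a = (\<Sum>n. a (3*n)) + (\<Sum>n. a (3*n+1)) + (\<Sum>n. a (3*n+2))"
proof -
  have s0: "summable (\<lambda>n. a (3*n))" using sub_summable[OF as, of 0] by simp
  have s1: "summable (\<lambda>n. a (3*n+1))" by (rule sub_summable[OF as])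
  have s2: "summable (\<lambda>n. a (3*n+2))" by (rule sub_summable[OF as])
  have "summable a" using as by (rule summable_rabs_cancel)
  from sums_group[OF summable_sums[OF this], of 3]
  have "(\<lambda>n. sum a {n*3..<n*3+3}) sums suminf a" by simp
  moreover have "sum a {n*3..<n*3+3} = a (3*n) + a (3*n+1) + a (3*n+2)" for n
    by (simp add: numeral_3_eq_3 mult.commute add.assoc)
  ultimately have "(\<lambda>n. a (3*n) + a (3*n+1) + a (3*n+2)) sums suminf a" by simp
  moreover have "(\<lambda>n. a (3*n) + a (3*n+1) + a (3*n+2)) sums ((\<Sum>n. a (3*n)) + (\<Sum>n. a (3*n+1)) + (\<Sum>n. a (3*n+2)))"
    by (intro sums_add summable_sums s0 s1 s2)
  ultimately show ?thesis using sums_unique2 by blast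
qed

lemma suminf_cmult':
  fixes g :: "nat \<Rightarrow> real"
  assumes "summable (\<lambda>n. c * g n)"
  shows "(\<Sum>n. c * g n) = c * suminf g"
proof (cases "c = 0")
  case False
  hence "summable g" using assms by (simp add: summable_cmult_iff)
  thus ?thesis by (rule suminf_mult)
qed simp

theorem lemma6p3:
  fixes t :: real
  shows "integrable lborel (\<lambda>(x::real). exp (- (x ^ 6) + t * x ^ 4)) \<and>
    (\<integral>x. exp (- (x ^ 6) + t * x ^ 4) \<partial>lborel) =
      1/3 * Gamma (1/6) * hyp2F2 (1/12) (7/12) (1/3) (2/3) (4 * t ^ 3 / 27)
    + 1/3 * t * Gamma (5/6) * hyp2F2 (5/12) (11/12) (2/3) (4/3) (4 * t ^ 3 / 27)
    + t ^ 2 * sqrt pi / 12 * hyp2F2 (3/4) (5/4) (4/3) (5/3) (4 * t ^ 3 / 27)"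
proof -
  define a where "a i = t^i / fact i * (Gamma((4*real i+1)/6)/3)" for i :: nat
  have IS: "integrable lborel (\<lambda>x::real. exp(-(x^6) + t*x^4))"
    "(\<integral>x. exp(-(x^6) + t*x^4) \<partial>lborel) = suminf a" "summable (\<lambda>i. \<bar>a i\<bar>)"
    using integral_series[of t] unfolding a_def by auto
  have s0: "summable (\<lambda>n. a (3*n))" using sub_summable[OF IS(3), of 0] by simp
  have s1: "summable (\<lambda>n. a (3*n+1))" by (rule sub_summable[OF IS(3)])
  have s2: "summable (\<lambda>n. a (3*n+2))" by (rule sub_summable[OF IS(3)])
  have e0: "(\<lambda>n. a (3*n)) = (\<lambda>n. 1/3 * Gamma(1/6) * (pochhammer (1/12) n * pochhammer (7/12) n / (pochhammer (1/3) n * pochhammer (2/3) n) * (4*t^3/27)^n / fact n))"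
    unfolding a_def by (rule ext, rule term0)
  have e1: "(\<lambda>n. a (3*n+1)) = (\<lambda>n. 1/3 * t * Gamma(5/6) * (pochhammer (5/12) n * pochhammer (11/12) n / (pochhammer (2/3) n * pochhammer (4/3) n) * (4*t^3/27)^n / fact n))"
    unfolding a_def by (rule ext, rule term1)
  have e2: "(\<lambda>n. a (3*n+2)) = (\<lambda>n. t^2 * sqrt pi / 12 * (pochhammer (3/4) n * pochhammer (5/4) n / (pochhammer (4/3) n * pochhammer (5/3) n) * (4*t^3/27)^n / fact n))"
    unfolding a_def by (rule ext, rule term2)
  have h0: "(\<Sum>n. a (3*n)) = 1/3 * Gamma (1/6) * hyp2F2 (1/12) (7/12) (1/3) (2/3) (4 * t ^ 3 / 27)"
    unfolding hyp2F2_def e0 by (rule suminf_cmult') (use s0 e0 in simp)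
  have h1: "(\<Sum>n. a (3*n+1)) = 1/3 * t * Gamma (5/6) * hyp2F2 (5/12) (11/12) (2/3) (4/3) (4 * t ^ 3 / 27)"
    unfolding hyp2F2_def e1 by (rule suminf_cmult') (use s1 e1 in simp)
  have h2: "(\<Sum>n. a (3*n+2)) = t ^ 2 * sqrt pi / 12 * hyp2F2 (3/4) (5/4) (4/3) (5/3) (4 * t ^ 3 / 27)"
    unfolding hyp2F2_def e2 by (rule suminf_cmult') (use s2 e2 in simp)
  show ?thesis using IS(1,2) split3[OF IS(3)] h0 h1 h2 by simp
qed


end
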